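(* Let $n\ge2$, $\alpha,\beta>0$ with $\alpha^2+\beta^2=1$ and $r=\alpha/\beta\in(0,1)$. Let $\mathcal E_\gamma$, $\gamma\in[0,1]$, be a family of single-qubit channels acting as $|0\rangle\langle0|\mapsto|0\rangle\langle0|$, $|1\rangle\langle1|\mapsto(1-\gamma)|1\rangle\langle1|+\gamma|0\rangle\langle0|$, $|0\rangle\langle1|\mapsto\lambda(\gamma)|0\rangle\langle1|$ with $\lambda(\gamma)\in\mathbb R$ and $\lambda(\gamma)^2\le1-\gamma$, and define $S(\gamma)=\lambda(\gamma)^2/(1-\gamma)$ for $\gamma\in[0,1)$. Let $\rho(\gamma)=\mathcal E_\gamma^{\otimes n}(|\psi_n\rangle\langle\psi_n|)$, $|\psi_n\rangle=\alpha|0^n\rangle+\beta|1^n\rangle$, so that $P_0=\alpha^2+\beta^2\gamma^n$, $P_n=\beta^2(1-\gamma)^n$, $|c|=\alpha\beta|\lambda(\gamma)|^n$. Suppose $\gamma_e\in(0,1)$ is the unique $\gamma\in(0,1)$ at which the partial-transpose block determinant $\beta^4[\gamma(1-\gamma)]^n-\alpha^2\beta^2\lambda(\gamma)^{2n}$ vanishes (the bipartite-negativity death threshold, which is the same for every bipartition), and $\gamma_+\in(0,1)$ is the unique $\gamma\in(0,1)$ with $|c(\gamma)|=P_n(\gamma)$ and $P_0(\gamma)\ge|c(\gamma)|$. Then $$r^{2/n}S(\gamma_e)=\gamma_e,\qquad r^{2/n}S(\gamma_+)=1-\gamma_+,$$ and $\gamma_e+\gamma_+=1$ holds if and only if $S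(\gamma_e)=S(1-\gamma_e)$.
   Context: Here $c=\langle0^n|\rho(\gamma)|1^n\rangle=\alpha\beta\lambda(\gamma)^n$, and $\rho(\gamma)$ lies in the real GHZ-$X$ manifold (diagonal in the computational basis except for the entry between $|0^n\rangle$ and $|1^n\rangle$). Pure amplitude damping is the case $\lambda=\sqrt{1-\gamma}$, $S\equiv1$. *)

theory Defs
  imports Complex_Main
begin

text \<open>Channel family parametrised by the real coherence factor lam(gamma).
  Quantities of the evolved GHZ-X state rho(gamma), as given in the paper.\<close>

definition S_fun :: "(real \<Rightarrow> real) \<Rightarrow> real \<Rightarrow> real" where
  "S_fun lam g = (lam g)^2 / (1 - g)"

definition P0 :: "real \<Rightarrow> real \<Rightarrow> nat \<Rightarrow> real \<Rightarrow> real" where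
  "P0 \<alpha> \<beta> n g = \<alpha>^2 + \<beta>^2 * g^n"

definition Pn :: "real \<Rightarrow> nat \<Rightarrow> real \<Rightarrow> real" where
  "Pn \<beta> n g = \<beta>^2 * (1 - g)^n"

text \<open>Coherence c = <0^n| rho |1^n> = alpha beta lam^n.\<close>
definition coh :: "real \<Rightarrow> real \<Rightarrow> (real \<Rightarrow> real) \<Rightarrow> nat \<Rightarrow> real \<Rightarrow> real" where
  "coh \<alpha> \<beta> lam n g = \<alpha> * \<beta> * (lam g)^n"

definition pt_det :: "real \<Rightarrow> real \<Rightarrow> (real \<Rightarrow> real) \<Rightarrow> nat \<Rightarrow> real \<Rightarrow> real" where
  "pt_det \<alpha> \<beta> lam n g = \<beta>^4 * (g * (1 - g))^n - \<alpha>^2 * \<beta>^2 * (lam g)^(2*n)"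

end

theory Submission
  imports Defs
begin

lemma pow_eq_base: "(a::real) \<ge> 0 \<Longrightarrow> b \<ge> 0 \<Longrightarrow> n > 0 \<Longrightarrow> a^n = b^n \<Longrightarrow> a = b"
  by (meson power_eq_imp_eq_base)

lemma sq_helper: "(r * \<bar>x\<bar>^n)^2 = r^2 * ((x::real)^2)^n"
proof -
  have "(r * \<bar>x\<bar>^n)^2 = r^2 * (\<bar>x\<bar>^n)^2" by (simp only: power_mult_distrib)
  also have "(\<bar>x\<bar>^n)^2 = (\<bar>x\<bar>^2)^n" by (simp only: power_mult[symmetric] mult.commute)
  also have "\<bar>x\<bar>^2 = x^2" by simp
  finally show ?thesis .
qed

lemma p2: "((a::real)^n)^2 = (a^2)^n" by (simp only: power_mult[symmetric] mult.commute)

theorem proposition1: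
  fixes \<alpha> \<beta> ge gp :: real and n :: nat and lam :: "real \<Rightarrow> real"
  assumes "n \<ge> 2"
    and "\<alpha> > 0" and "\<beta> > 0" and "\<alpha>^2 + \<beta>^2 = 1"
    and "\<alpha> / \<beta> < 1"
    and "\<forall>g\<in>{0..1}. (lam g)^2 \<le> 1 - g"
    and "ge \<in> {0<..<1}" and "pt_det \<alpha> \<beta> lam n ge = 0"
    and "\<forall>g\<in>{0<..<1}. pt_det \<alpha> \<beta> lam n g = 0 \<longrightarrow> g = ge"
    and "gp \<in> {0<..<1}" and "\<bar>coh \<alpha> \<beta> lam n gp\<bar> = Pn \<beta> n gp"
    and "P0 \<alpha> \<beta> n gp \<ge> \<bar>coh \<alpha> \<beta> lam n gp\<bar>"
    and "\<forall>g\<in>{0<..<1}. \<bar>coh \<alpha> \<beta> lam n g\<bar> = Pn \<beta> n g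
            \<and> P0 \<alpha> \<beta> n g \<ge> \<bar>coh \<alpha> \<beta> lam n g\<bar> \<longrightarrow> g = gp"
  shows "(\<alpha> / \<beta>) powr (2 / real n) * S_fun lam ge = ge
       \<and> (\<alpha> / \<beta>) powr (2 / real n) * S_fun lam gp = 1 - gp
       \<and> (ge + gp = 1 \<longleftrightarrow> S_fun lam ge = S_fun lam (1 - ge))"
proof -
  define r where "r = \<alpha> / \<beta>"
  define k where "k = r powr (2 / real n)"
  have n0: "n > 0" using assms(1) by simp
  have r0: "r > 0" unfolding r_def using assms(2,3) by simp
  have k0: "k > 0" unfolding k_def using r0 by simp
  have kn: "k ^ n = r^2"
  proof -
    have "k ^ n = r powr (real n * (2 / real n))"
      unfolding k_def using powr_power[of r "2 / real n" n] r0 by simp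
    also have "real n * (2 / real n) = real (2::nat)" using n0 by simp
    also have "r powr real (2::nat) = r^2" using r0 by (rule powr_realpow)
    finally show ?thesis .
  qed
  have be: "\<beta> ^ 2 > 0" using assms(3) by simp
  have ge01: "0 < ge" "ge < 1" using assms(7) by auto
  have gp01: "0 < gp" "gp < 1" using assms(10) by auto
  have E1: "\<beta>^4 * (ge * (1 - ge))^n = \<alpha>^2 * \<beta>^2 * ((lam ge)^2)^n"
    using assms(8) unfolding pt_det_def by (simp add: power_mult)
  have "(ge * (1 - ge))^n = (k * (lam ge)^2)^n"
  proof -
    have "(k * (lam ge)^2)^n = r^2 * ((lam ge)^2)^n" by (simp add: power_mult_distrib kn)
    also have "\<dots> = \<alpha>^2 * \<beta>^2 * ((lam ge)^2)^n / \<beta>^4"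
      unfolding r_def using assms(3) by (simp add: power_divide field_simps eval_nat_numeral)
    also have "\<dots> = \<beta>^4 * (ge * (1 - ge))^n / \<beta>^4" using E1 by (simp only:)
    also have "\<dots> = (ge * (1 - ge))^n" using assms(3) by simp
    finally show ?thesis by simp
  qed
  hence G1: "ge * (1 - ge) = k * (lam ge)^2"
    by (rule pow_eq_base[rotated 3]) (use ge01 k0 n0 in auto)
  have R1: "k * S_fun lam ge = ge"
    unfolding S_fun_def using G1 ge01 by (simp add: field_simps)
  have C1: "\<alpha> * \<beta> * \<bar>lam gp\<bar>^n = \<beta>^2 * (1 - gp)^n"
    using assms(11) assms(2,3) unfolding coh_def Pn_def by (simp add: abs_mult power_abs)
  have "r * \<bar>lam gp\<bar>^n = (1 - gp)^n"
  proof -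
    have "r * \<bar>lam gp\<bar>^n = \<alpha> * \<beta> * \<bar>lam gp\<bar>^n / \<beta>^2"
      unfolding r_def using assms(3) by (simp add: field_simps power2_eq_square)
    thus ?thesis using C1 assms(3) by simp
  qed
  hence "(r * \<bar>lam gp\<bar>^n)^2 = ((1 - gp)^n)^2" by simp
  hence "(k * (lam gp)^2)^n = ((1 - gp)^2)^n"
    by (subst (asm) sq_helper, subst (asm) p2) (simp only: power_mult_distrib kn)
  hence G2: "k * (lam gp)^2 = (1 - gp)^2"
    by (rule pow_eq_base[rotated 3]) (use gp01 k0 n0 in auto)
  have R2: "k * S_fun lam gp = 1 - gp"
    unfolding S_fun_def using G2 gp01 by (simp add: field_simps power2_eq_square)
  have R3: "ge + gp = 1 \<longleftrightarrow> S_fun lam ge = S_fun lam (1 - ge)"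
  proof
    assume "ge + gp = 1"
    hence "gp = 1 - ge" by simp
    hence "k * S_fun lam (1 - ge) = ge" using R2 by simp
    thus "S_fun lam ge = S_fun lam (1 - ge)" using R1 k0
      by (metis mult_cancel_left less_irrefl)
  next
    assume H: "S_fun lam ge = S_fun lam (1 - ge)"
    define g where "g = 1 - ge"
    have g01: "0 < g" "g < 1" using ge01 g_def by auto
    have "k * S_fun lam g = ge" using R1 H g_def by simp
    hence G3: "k * (lam g)^2 = ge^2"
      unfolding S_fun_def g_def using ge01 by (simp add: field_simps power2_eq_square)
    have "(r * \<bar>lam g\<bar>^n)^2 = (ge^n)^2"
    proof -
      have "(r * \<bar>lam g\<bar>^n)^2 = (k * (lam g)^2)^n"
        by (subst sq_helper) (simp only: power_mult_distrib kn)
      also have "\<dots> = (ge^n)^2" using G3 by (simp only: p2)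
      finally show ?thesis .
    qed
    hence rl: "r * \<bar>lam g\<bar>^n = ge^n"
      by (rule pow_eq_base[rotated 3]) (use ge01 r0 in auto)
    have c1: "\<bar>coh \<alpha> \<beta> lam n g\<bar> = Pn \<beta> n g"
    proof -
      have "\<bar>coh \<alpha> \<beta> lam n g\<bar> = \<alpha> * \<beta> * \<bar>lam g\<bar>^n"
        using assms(2,3) unfolding coh_def by (simp add: abs_mult power_abs)
      also have "\<dots> = \<beta>^2 * (r * \<bar>lam g\<bar>^n)"
        unfolding r_def using assms(3) by (simp add: field_simps power2_eq_square)
      also have "\<dots> = \<beta>^2 * (1 - g)^n" using rl g_def by simp
      finally show ?thesis unfolding Pn_def .
    qed
    have "ge \<le> k"
    proof -
      have "(lam ge)^2 \<le> 1 - ge" by (rule assms(6)[rule_format]) (use ge01 in auto)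
      hence "k * (lam ge)^2 \<le> k * (1 - ge)" using k0 by (intro mult_left_mono) auto
      hence "ge * (1 - ge) \<le> k * (1 - ge)" using G1 by linarith
      moreover have "0 < 1 - ge" using ge01 by simp
      ultimately show ?thesis using mult_le_cancel_right_pos by blast
    qed
    hence "ge^n \<le> k^n" using ge01 by (intro power_mono) auto
    hence "ge^n \<le> r^2" using kn by (simp only:)
    hence "\<beta>^2 * ge^n \<le> \<beta>^2 * r^2" using be by (intro mult_left_mono) auto
    also have "\<beta>^2 * r^2 = \<alpha>^2" unfolding r_def using assms(3) by (simp add: power_divide)
    finally have "\<beta>^2 * ge^n \<le> \<alpha>^2" .
    moreover have "1 - g = ge" using g_def by simp
    moreover have "0 \<le> \<beta>^2 * g^n" using g01 by simp
    ultimately have P: "P0 \<alpha> \<beta> n g \<ge> \<bar>coh \<alpha> \<beta> lam n g\<bar>"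
      unfolding c1 P0_def Pn_def by simp
    have "g \<in> {0<..<1}" using g01 by simp
    hence "g = gp" using assms(13) c1 P by blast
    thus "ge + gp = 1" using g_def by simp
  qed
  show ?thesis using R1 R2 R3 unfolding k_def r_def by simp
qed

end
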